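(* For any constants $\mu>0$ and $\kappa>0$, the function $$\eta_g(\varepsilon)=\mu\bigl(1-\kappa\,Q^{-1}(\varepsilon)\bigr)(1-\varepsilon),\qquad \varepsilon\in(0,1),$$ is strictly concave on $(0,1)$; equivalently, $\eta_g''(\varepsilon)<0$ for all $\varepsilon\in(0,1)$.
   Context: $Q(x)=\int_x^\infty \frac{1}{\sqrt{2\pi}}e^{-t^2/2}\,dt$ is the standard normal tail function and $Q^{-1}:(0,1)\to\mathbb{R}$ its inverse. *)

theory Defs
  imports "HOL-Analysis.Analysis" "HOL-Probability.Probability"
begin

definition Qfun :: "real \<Rightarrow> real" where
  "Qfun x = (LBINT t:{x<..}. std_normal_density t)"

text \<open>Its inverse on (0,1): Q is a strictly decreasing bijection from the reals onto (0,1).\<close>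
definition Qinv :: "real \<Rightarrow> real" where
  "Qinv e = (THE x. Qfun x = e)"

definition strictly_concave_on :: "real set \<Rightarrow> (real \<Rightarrow> real) \<Rightarrow> bool" where
  "strictly_concave_on S f \<longleftrightarrow> convex S \<and>
    (\<forall>x\<in>S. \<forall>y\<in>S. \<forall>u. x \<noteq> y \<and> 0 < u \<and> u < 1 \<longrightarrow>
        f (u * x + (1 - u) * y) > u * f x + (1 - u) * f y)"

definition eta_g :: "real \<Rightarrow> real \<Rightarrow> real \<Rightarrow> real" where
  "eta_g \<mu> \<kappa> e = \<mu> * (1 - \<kappa> * Qinv e) * (1 - e)"

end

theory Submission imports Defs "HOL-Real_Asymp.Real_Asymp" begin

lemma phi_set_integrable: "set_integrable lborel A std_normal_density" if "A \<in> sets borel"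
  unfolding set_integrable_def
  using that by (intro integrable_mult_indicator) auto

lemma phi_ii: "interval_lebesgue_integrable lborel a b std_normal_density"
  unfolding interval_lebesgue_integrable_def
  by (auto intro!: phi_set_integrable)

lemma Q_interval: "Qfun x = (LBINT t=ereal x..\<infinity>. std_normal_density t)"
  unfolding Qfun_def by (simp add: interval_integral_to_infinity_eq)

lemma Q_split: "Qfun x = Qfun 0 - (LBINT t=ereal 0..ereal x. std_normal_density t)"
proof -
  have "(LBINT t=ereal 0..ereal x. std_normal_density t) + (LBINT t=ereal x..\<infinity>. std_normal_density t)
     = (LBINT t=ereal 0..\<infinity>. std_normal_density t)"
    by (rule interval_integral_sum) (rule phi_ii)
  then show ?thesis using Q_interval[of x] Q_interval[of 0] by simp
qed

lemma Q_deriv: "(Qfun has_real_derivative - std_normal_density x) (at x)"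
proof -
  let ?a = "-\<bar>x\<bar> - 1" and ?b = "\<bar>x\<bar> + 1"
  have c: "continuous_on {?a..?b} std_normal_density"
    unfolding std_normal_density_def by (intro continuous_intros) auto
  have "((\<lambda>u. LBINT y=ereal 0..ereal u. std_normal_density y) has_vector_derivative std_normal_density x) (at x within {?a..?b})"
    using interval_integral_FTC2[OF _ _ c, of 0 x] by linarith
  then have "((\<lambda>u. LBINT y=ereal 0..ereal u. std_normal_density y) has_real_derivative std_normal_density x) (at x)"
    using at_within_Icc_at[of ?a x ?b] has_real_derivative_iff_has_vector_derivative by simp
  then have "((\<lambda>u. Qfun 0 - (LBINT y=ereal 0..ereal u. std_normal_density y)) has_real_derivative 0 - std_normal_density x) (at x)"
    by (intro DERIV_diff DERIV_const)
  moreover have "(\<lambda>u. Qfun 0 - (LBINT y=ereal 0..ereal u. std_normal_density y)) = Qfun"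
    by (rule ext) (rule Q_split[symmetric])
  ultimately show ?thesis by simp
qed

lemma Q_sym: "Qfun x + Qfun (-x) = 1"
proof -
  have "Qfun x = (LBINT t=-\<infinity>..ereal (-x). std_normal_density (- t))"
    using interval_integral_reflect[of "ereal x" "\<infinity>" std_normal_density] Q_interval[of x] by simp
  also have "\<dots> = (LBINT t=-\<infinity>..ereal (-x). std_normal_density t)"
    by (simp add: std_normal_density_def)
  finally have "Qfun x + Qfun (-x) = (LBINT t=-\<infinity>..ereal (-x). std_normal_density t) + (LBINT t=ereal (-x)..\<infinity>. std_normal_density t)"
    using Q_interval[of "-x"] by simp
  also have "\<dots> = (LBINT t=-\<infinity>..\<infinity>. std_normal_density t)"
    by (rule interval_integral_sum) (rule phi_ii)
  also have "\<dots> = 1"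
    unfolding interval_lebesgue_integral_def set_lebesgue_integral_def einterval_def by simp
  finally show ?thesis .
qed

lemma phi_lim: "((\<lambda>t. std_normal_density t) \<longlongrightarrow> 0) at_top"
proof -
  have "((\<lambda>t. (1 / sqrt (2 * pi)) * exp (- t\<^sup>2 / 2)) \<longlongrightarrow> (1 / sqrt (2 * pi)) * 0) at_top"
    by real_asymp
  then show ?thesis by (simp add: std_normal_density_def)
qed

lemma mom1: assumes "0 \<le> y"
  shows "has_bochner_integral lborel (\<lambda>t. indicator {y..} t *\<^sub>R (t * std_normal_density t)) (std_normal_density y)"
proof -
  have "(\<integral>\<^sup>+t. ennreal (t * std_normal_density t) * indicator {y..} t \<partial>lborel) = ennreal (0 - (- std_normal_density y))"
  proof (rule nn_integral_FTC_atLeast)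
    show "(\<lambda>t. t * std_normal_density t) \<in> borel_measurable borel" by measurable
    show "DERIV (\<lambda>t. - std_normal_density t) x :> x * std_normal_density x" for x
      unfolding std_normal_density_def by (auto intro!: derivative_eq_intros simp: field_simps)
    show "y \<le> x \<Longrightarrow> 0 \<le> x * std_normal_density x" for x using assms by simp
    show "((\<lambda>t. - std_normal_density t) \<longlongrightarrow> 0) at_top"
      using tendsto_minus[OF phi_lim] by simp
  qed
  then have "(\<integral>\<^sup>+t. ennreal (indicator {y..} t *\<^sub>R (t * std_normal_density t)) \<partial>lborel) = ennreal (std_normal_density y)"
    by (simp add: indicator_mult_ennreal mult.commute)
  then show ?thesis
    by (intro has_bochner_integral_nn_integral) (use assms in \<open>auto split: split_indicator\<close>)
qed

lemma mills: assumes "0 < y" shows "Qfun y \<le> std_normal_density y / y"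
proof -
  have "Qfun y = integral\<^sup>L lborel (\<lambda>t. indicator {y<..} t *\<^sub>R std_normal_density t)"
    unfolding Qfun_def set_lebesgue_integral_def by simp
  also have "\<dots> \<le> integral\<^sup>L lborel (\<lambda>t. indicator {y..} t *\<^sub>R (t * std_normal_density t) / y)"
  proof (rule integral_mono)
    show "integrable lborel (\<lambda>t. indicator {y<..} t *\<^sub>R std_normal_density t)"
      using phi_set_integrable[of "{y<..}"] unfolding set_integrable_def by simp
    show "integrable lborel (\<lambda>t. indicator {y..} t *\<^sub>R (t * std_normal_density t) / y)"
      using mom1[of y] assms by (intro integrable_divide) (auto simp: has_bochner_integral_iff)
    fix t show "indicator {y<..} t *\<^sub>R std_normal_density t \<le> indicator {y..} t *\<^sub>R (t * std_normal_density t) / y"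
      using assms by (auto split: split_indicator simp: field_simps intro!: mult_right_mono)
  qed
  also have "\<dots> = std_normal_density y / y"
    using mom1[of y] assms by (simp add: has_bochner_integral_iff)
  finally show ?thesis .
qed

lemma Q_nonneg: "0 \<le> Qfun x"
  unfolding Qfun_def set_lebesgue_integral_def by (intro integral_nonneg_AE) auto

lemma Q_dec: "x < y \<Longrightarrow> Qfun y < Qfun x"
  by (rule DERIV_neg_imp_decreasing[of x y Qfun]) (auto intro!: exI Q_deriv simp: std_normal_density_def)

lemma Q_cont: "isCont Qfun x"
  by (rule DERIV_isCont[OF Q_deriv])

lemma Q_inj: "Qfun x = Qfun y \<Longrightarrow> x = y"
  using Q_dec[of x y] Q_dec[of y x] by (cases x y rule: linorder_cases) auto

lemma Qinv_Q: "Qinv (Qfun x) = x"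
  unfolding Qinv_def by (rule the_equality) (auto intro: Q_inj)

lemma phi_le1: "std_normal_density x \<le> 1"
proof -
  have "1 \<le> sqrt (2 * pi)" using pi_gt3 by simp
  moreover have "exp (- (x\<^sup>2 / 2)) \<le> 1" by simp
  ultimately have "exp (- (x\<^sup>2 / 2)) \<le> sqrt (2 * pi)" by linarith
  then show ?thesis unfolding std_normal_density_def
    by (simp add: divide_le_eq_1)
qed

lemma Q_small: assumes "0 < y" shows "Qfun y \<le> 1 / y"
  using mills[OF assms] phi_le1[of y] assms
  by (smt (verit) divide_right_mono)

lemma Q_surj: assumes "0 < e" "e < 1" shows "\<exists>x. Qfun x = e"
proof -
  define b where "b = 2 / e"
  define a where "a = - (2 / (1 - e))"
  have b: "0 < b" using assms by (simp add: b_def)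
  have "Qfun b \<le> e / 2" using Q_small[OF b] assms by (simp add: b_def)
  then have Qb: "Qfun b \<le> e" using assms by simp
  have a: "0 < -a" using assms by (simp add: a_def)
  have "Qfun (-a) \<le> (1 - e) / 2" using Q_small[OF a] assms by (simp add: a_def)
  then have Qa: "e \<le> Qfun a" using Q_sym[of a] assms by simp
  have "a \<le> b" using a b by simp
  from IVT2[of Qfun b e a, OF Qb Qa this] Q_cont show ?thesis by blast
qed

lemma Q_Qinv: assumes "0 < e" "e < 1" shows "Qfun (Qinv e) = e"
  using Q_surj[OF assms] Qinv_Q by metis

lemma phi_pos: "0 < std_normal_density x"
  by (simp add: std_normal_density_def)

lemma phi_deriv: "(std_normal_density has_real_derivative - x * std_normal_density x) (at x)"
  unfolding std_normal_density_def by (auto intro!: derivative_eq_intros simp: field_simps)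

lemma Qinv_cont: "isCont Qinv e" if "0 < e" "e < 1"
proof -
  have "isCont Qinv (Qfun (Qinv e))"
    by (rule isCont_inverse_function[of 1]) (auto simp: Qinv_Q Q_cont)
  then show ?thesis using Q_Qinv[OF that] by simp
qed

lemma Qinv_deriv: "(Qinv has_real_derivative - 1 / std_normal_density (Qinv e)) (at e)" if "0 < e" "e < 1"
proof -
  have "(Qinv has_real_derivative inverse (- std_normal_density (Qinv e))) (at e)"
    using DERIV_inverse_function[where f=Qfun and g=Qinv and x=e and D="- std_normal_density (Qinv e)" and a=0 and b=1, OF Q_deriv]
      that phi_pos[of "Qinv e"] Q_Qinv Qinv_cont[OF that] by force
  then show ?thesis by (simp add: divide_inverse inverse_minus_eq)
qed

lemma concave_core:
  fixes f f' :: "real \<Rightarrow> real"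
  assumes d: "\<And>x. x\<in>{0<..<1} \<Longrightarrow> (f has_real_derivative f' x) (at x)"
    and m: "\<And>x y. x\<in>{0<..<1} \<Longrightarrow> y\<in>{0<..<1} \<Longrightarrow> x < y \<Longrightarrow> f' y < f' x"
    and xy: "x\<in>{0<..<1}" "y\<in>{0<..<1}" "x < y" and u: "0 < u" "u < 1"
  shows "f (u * x + (1 - u) * y) > u * f x + (1 - u) * f y"
proof -
  define z where "z = u * x + (1 - u) * y"
  have xz: "x < z" and zy: "z < y"
  proof -
    have "u * x + (1 - u) * x < u * x + (1 - u) * y" using xy u by simp
    then show "x < z" by (simp add: z_def algebra_simps)
    have "u * x + (1 - u) * y < u * y + (1 - u) * y" using xy u by simp
    then show "z < y" by (simp add: z_def algebra_simps)
  qed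
  have z: "z \<in> {0<..<1}" using xz zy xy by auto
  obtain a where a: "x < a" "a < z" "f z - f x = (z - x) * f' a"
    using MVT2[of x z f f'] xz xy z d by (metis greaterThanLessThan_iff order_le_less_trans order_less_le_trans)
  obtain b where b: "z < b" "b < y" "f y - f z = (y - z) * f' b"
    using MVT2[of z y f f'] zy xy z d by (metis greaterThanLessThan_iff order_le_less_trans order_less_le_trans)
  have ab: "f' b < f' a" using m[of a b] a b xy by auto
  have e1: "z - x = (1 - u) * (y - x)" and e2: "y - z = u * (y - x)" by (simp_all add: z_def algebra_simps)
  have "f z - (u * f x + (1 - u) * f y) = u * (f z - f x) - (1 - u) * (f y - f z)"
    by (simp add: algebra_simps)
  also have "\<dots> = u * (1 - u) * (y - x) * (f' a - f' b)"
    unfolding a(3) b(3) e1 e2 by (simp add: algebra_simps)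
  also have "\<dots> > 0" using u xy ab by (intro mult_pos_pos) auto
  finally show ?thesis unfolding z_def by simp
qed

lemma concave_from_deriv:
  fixes f f' :: "real \<Rightarrow> real"
  assumes d: "\<And>x. x\<in>{0<..<1} \<Longrightarrow> (f has_real_derivative f' x) (at x)"
    and m: "\<And>x y. x\<in>{0<..<1} \<Longrightarrow> y\<in>{0<..<1} \<Longrightarrow> x < y \<Longrightarrow> f' y < f' x"
  shows "strictly_concave_on {0<..<1} f"
  unfolding strictly_concave_on_def
proof (intro conjI ballI allI impI)
  show "convex {0<..<(1::real)}" by (rule convex_real_interval)
  fix x y u :: real assume xy: "x \<in> {0<..<1}" "y \<in> {0<..<1}" and h: "x \<noteq> y \<and> 0 < u \<and> u < 1"
  show "f (u * x + (1 - u) * y) > u * f x + (1 - u) * f y"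
  proof (cases "x < y")
    case True then show ?thesis using concave_core[OF d m xy True] h by blast
  next
    case False
    then have "y < x" using h by auto
    from concave_core[OF d m xy(2) xy(1) this, of "1 - u"] h show ?thesis
      by (simp add: algebra_simps)
  qed
qed

theorem mainTheorem2:
  fixes \<mu> \<kappa> :: real
  assumes "\<mu> > 0" and "\<kappa> > 0"
  shows "strictly_concave_on {0<..<1} (eta_g \<mu> \<kappa>)
    \<and> (\<exists>d1 d2. (\<forall>e\<in>{0<..<1}. (eta_g \<mu> \<kappa> has_real_derivative d1 e) (at e))
             \<and> (\<forall>e\<in>{0<..<1}. (d1 has_real_derivative d2 e) (at e) \<and> d2 e < 0))"
proof -
  let ?g = Qinv and ?p = std_normal_density
  define d1 where "d1 e = \<mu> * (\<kappa> * (1 - e) / ?p (?g e) - 1 + \<kappa> * ?g e)" for e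
  define d2 where "d2 e = - \<mu> * \<kappa> * (2 * ?p (?g e) + (1 - e) * ?g e) / (?p (?g e))\<^sup>2" for e
  have eta: "eta_g \<mu> \<kappa> = (\<lambda>e. \<mu> * (1 - \<kappa> * Qinv e) * (1 - e))"
    by (rule ext) (simp add: eta_g_def)
  have D1: "(eta_g \<mu> \<kappa> has_real_derivative d1 e) (at e)" if e: "e \<in> {0<..<1}" for e
  proof -
    have gD: "(Qinv has_real_derivative - 1 / ?p (?g e)) (at e)" using e Qinv_deriv by auto
    have p: "?p (?g e) > 0" by (rule phi_pos)
    show ?thesis unfolding eta
      by (rule derivative_eq_intros gD refl)+ (use p in \<open>simp add: d1_def field_simps\<close>)
  qed
  have D2: "(d1 has_real_derivative d2 e) (at e)" if e: "e \<in> {0<..<1}" for e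
  proof -
    have gD: "(Qinv has_real_derivative - 1 / ?p (?g e)) (at e)" using e Qinv_deriv by auto
    have pD: "((\<lambda>e. ?p (?g e)) has_real_derivative (- ?g e * ?p (?g e)) * (- 1 / ?p (?g e))) (at e)"
      by (rule DERIV_chain2[OF phi_deriv gD])
    have p: "?p (?g e) > 0" by (rule phi_pos)
    have h1: "((\<lambda>e. \<kappa> * (1 - e)) has_real_derivative - \<kappa>) (at e)"
      by (auto intro!: derivative_eq_intros)
    have h2: "((\<lambda>e. \<kappa> * (1 - e) / ?p (?g e)) has_real_derivative
        (- \<kappa> * ?p (?g e) - \<kappa> * (1 - e) * ((- ?g e * ?p (?g e)) * (- 1 / ?p (?g e)))) / (?p (?g e) * ?p (?g e))) (at e)"
      by (rule DERIV_divide[OF h1 pD]) (use p in simp)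
    have h3: "((\<lambda>e. \<kappa> * ?g e) has_real_derivative \<kappa> * (- 1 / ?p (?g e))) (at e)"
      by (rule DERIV_cmult[OF gD])
    have h4: "(d1 has_real_derivative \<mu> * ((- \<kappa> * ?p (?g e) - \<kappa> * (1 - e) * ((- ?g e * ?p (?g e)) * (- 1 / ?p (?g e)))) / (?p (?g e) * ?p (?g e)) - 0 + \<kappa> * (- 1 / ?p (?g e)))) (at e)"
      unfolding d1_def[abs_def]
      by (intro DERIV_cmult DERIV_add DERIV_diff h2 h3 DERIV_const)
    show ?thesis
      by (rule DERIV_cong[OF h4]) (use p in \<open>simp add: d2_def field_simps power2_eq_square\<close>)
  qed
  have neg: "d2 e < 0" if e: "e \<in> {0<..<1}" for e
  proof -
    define x where "x = ?g e"
    have ex: "Qfun x = e" using e Q_Qinv by (auto simp: x_def)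
    have p: "?p x > 0" by (rule phi_pos)
    have key: "0 < 2 * ?p x + (1 - e) * x"
    proof (cases "0 \<le> x")
      case True then show ?thesis using p e by (simp add: add_pos_nonneg)
    next
      case False
      then have y: "0 < - x" by simp
      have "1 - e = Qfun (- x)" using Q_sym[of x] ex by simp
      then have q: "(1 - e) * x = - (Qfun (- x) * (-x))" by simp
      have "Qfun (-x) * (-x) \<le> ?p (-x)" using mills[OF y] y by (simp add: field_simps)
      moreover have "?p (-x) = ?p x" by (simp add: std_normal_density_def)
      ultimately show ?thesis using p q by linarith
    qed
    have "0 < \<mu> * \<kappa> * (2 * ?p x + (1 - e) * x) / (?p x)\<^sup>2"
      using assms key p by (intro divide_pos_pos mult_pos_pos) auto
    then show ?thesis unfolding d2_def x_def by (simp only: minus_divide_left mult_minus_left neg_less_0_iff_less)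
  qed
  have m: "d1 y < d1 x" if "x \<in> {0<..<1}" "y \<in> {0<..<1}" "x < y" for x y
  proof (rule DERIV_neg_imp_decreasing[of x y d1])
    show "x < y" by fact
    fix t assume "x \<le> t" "t \<le> y"
    then have "t \<in> {0<..<1}" using that by auto
    then show "\<exists>D. DERIV d1 t :> D \<and> D < 0" using D2 neg by blast
  qed
  have "strictly_concave_on {0<..<1} (eta_g \<mu> \<kappa>)" by (rule concave_from_deriv[OF D1 m])
  moreover have "(\<forall>e\<in>{0<..<1}. (eta_g \<mu> \<kappa> has_real_derivative d1 e) (at e))
             \<and> (\<forall>e\<in>{0<..<1}. (d1 has_real_derivative d2 e) (at e) \<and> d2 e < 0)"
    using D1 D2 neg by blast
  ultimately show ?thesis by blast
qed

end
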